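(* Let $Q=(G\leftleftarrows A)$ be a group-like graph. Then the bialgebra $(\mathbf k[A]\xrightarrow{\phi}\mathbf k[G])$ in $\mathcal{LM}$ (with $\phi(a)=t(a)-s(a)$, bimodule structure from the two-sided $G$-action on $A$, $\Delta_0(g)=g\otimes g$, $\Delta_1(a)=a\otimes t(a)+s(a)\otimes a$) is a Hopf algebra in $\mathcal{LM}$, with antipode given by $S_0(g)=g^{-1}$ on $\mathbf k[G]$ and $S_1(a)=-s(a)^{-1}\cdot a\cdot t(a)^{-1}$ on $\mathbf k[A]$.
   Context: A group-like graph is a directed graph $(G\overset{s}{\underset{t}{\leftleftarrows}}A)$ with an associative morphism $\mu$ from its Cartesian square (vertices $G\times G$, arrows $A\times G\sqcup G\times A$) to itself, such that the induced semigroup structure on $G$ is a group; $\mu$ gives left and right actions of $G$ on $A$ compatible with $s,t$ (e.g. $s(g\cdot a)=gs(a)$, $t(a\cdot g)=t(a)g$). Over a field $\mathbf k$ of characteristic $0$, the category $\mathcal{LM}$ has objects linear maps $U\to V$ and tensor product $(U\xrightarrow{f}V)\otimes(U'\xrightarrow{f'}V')=(U\otimes V'+V\otimes U'\to V\otimes V')$. A bialgebra in $\mathcal{LM}$ is $(\mathcal A\xrightarrow{f}\mathcal H)$ with $\mathcal H$ a bialgebra (coproduct $\Delta_0$), $\mathcal A$ an $\mathcal H$-bimodule, $f$ a bimodule map, and a bimodule map $\Delta_1:\mathcal A\to\mathcal A\otimes\mathcal H+\mathcal H\otimes\mathcal A$ with $\Delta_0 f=(f\otimes\mathrm{Id}+\mathrm{Id}\otimes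 f)\Delta_1$. It is a Hopf algebra if there are an antipode $S_0$ of $\mathcal H$ and a linear map $S_1:\mathcal A\to\mathcal A$ with $f S_1=S_0 f$ such that $\mu\circ(S_1\otimes\mathrm{Id}_{\mathcal H}+S_0\otimes\mathrm{Id}_{\mathcal A})\circ\Delta_1=\mu\circ(\mathrm{Id}_{\mathcal A}\otimes S_0+\mathrm{Id}_{\mathcal H}\otimes S_1)\circ\Delta_1=0$, where $\mu$ denotes the bimodule actions $\mathcal A\otimes\mathcal H+\mathcal H\otimes\mathcal A\to\mathcal A$. *)

theory Defs
  imports Main "HOL-Library.Poly_Mapping"
begin

text \<open>The free vector space k[X] is modelled as the type of finitely supported
functions X =>0 k, the tensor product k[X] \<otimes> k[Y] as k[X \<times> Y], and the
direct sum V \<oplus> W as the product type V \<times> W.\<close>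

definition bvec :: "'x \<Rightarrow> ('x \<Rightarrow>\<^sub>0 'k::field)" where
  "bvec x = Poly_Mapping.single x 1"

definition smul :: "'k::field \<Rightarrow> ('x \<Rightarrow>\<^sub>0 'k) \<Rightarrow> ('x \<Rightarrow>\<^sub>0 'k)" where
  "smul c u = Poly_Mapping.map ((*) c) u"

definition lin_ext :: "('x \<Rightarrow> ('y \<Rightarrow>\<^sub>0 'k::field)) \<Rightarrow> ('x \<Rightarrow>\<^sub>0 'k) \<Rightarrow> ('y \<Rightarrow>\<^sub>0 'k)" where
  "lin_ext b v = (\<Sum>x\<in>Poly_Mapping.keys v. smul (Poly_Mapping.lookup v x) (b x))"

definition lin_ext_scalar :: "('x \<Rightarrow> 'k::field) \<Rightarrow> ('x \<Rightarrow>\<^sub>0 'k) \<Rightarrow> 'k" where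
  "lin_ext_scalar b v = (\<Sum>x\<in>Poly_Mapping.keys v. Poly_Mapping.lookup v x * b x)"

definition lin_map :: "(('x \<Rightarrow>\<^sub>0 'k::field) \<Rightarrow> ('y \<Rightarrow>\<^sub>0 'k)) \<Rightarrow> bool" where
  "lin_map F \<longleftrightarrow> (\<forall>u v. F (u + v) = F u + F v) \<and> (\<forall>c u. F (smul c u) = smul c (F u))"

definition tens :: "('x \<Rightarrow>\<^sub>0 'k::field) \<Rightarrow> ('y \<Rightarrow>\<^sub>0 'k) \<Rightarrow> ('x \<times> 'y \<Rightarrow>\<^sub>0 'k)" where
  "tens u v = (\<Sum>x\<in>Poly_Mapping.keys u. \<Sum>y\<in>Poly_Mapping.keys v. Poly_Mapping.single (x, y) (Poly_Mapping.lookup u x * Poly_Mapping.lookup v y))"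

definition tmap :: "(('x \<Rightarrow>\<^sub>0 'k::field) \<Rightarrow> ('u \<Rightarrow>\<^sub>0 'k)) \<Rightarrow> (('y \<Rightarrow>\<^sub>0 'k) \<Rightarrow> ('v \<Rightarrow>\<^sub>0 'k))
    \<Rightarrow> ('x \<times> 'y \<Rightarrow>\<^sub>0 'k) \<Rightarrow> ('u \<times> 'v \<Rightarrow>\<^sub>0 'k)" where
  "tmap F F' = lin_ext (\<lambda>(x, y). tens (F (bvec x)) (F' (bvec y)))"

definition reassoc :: "(('x \<times> 'y) \<times> 'z \<Rightarrow>\<^sub>0 'k::field) \<Rightarrow> ('x \<times> ('y \<times> 'z) \<Rightarrow>\<^sub>0 'k)" where
  "reassoc = lin_ext (\<lambda>((x, y), z). bvec (x, (y, z)))"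

definition is_algebra ::
  "(('x \<times> 'x \<Rightarrow>\<^sub>0 'k::field) \<Rightarrow> ('x \<Rightarrow>\<^sub>0 'k)) \<Rightarrow> ('x \<Rightarrow>\<^sub>0 'k) \<Rightarrow> bool" where
  "is_algebra m eta \<longleftrightarrow> lin_map m
     \<and> (\<forall>u v w. m (tens (m (tens u v)) w) = m (tens u (m (tens v w))))
     \<and> (\<forall>u. m (tens eta u) = u \<and> m (tens u eta) = u)"

definition is_coalgebra ::
  "(('x \<Rightarrow>\<^sub>0 'k::field) \<Rightarrow> ('x \<times> 'x \<Rightarrow>\<^sub>0 'k)) \<Rightarrow> (('x \<Rightarrow>\<^sub>0 'k) \<Rightarrow> 'k) \<Rightarrow> bool" where
  "is_coalgebra D eps \<longleftrightarrow> lin_map D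
     \<and> (\<forall>u v. eps (u + v) = eps u + eps v) \<and> (\<forall>c u. eps (smul c u) = c * eps u)
     \<and> (\<forall>u. reassoc (tmap D id (D u)) = tmap id D (D u))
     \<and> (\<forall>u. lin_ext (\<lambda>(x, y). smul (eps (bvec x)) (bvec y)) (D u) = u)
     \<and> (\<forall>u. lin_ext (\<lambda>(x, y). smul (eps (bvec y)) (bvec x)) (D u) = u)"

definition mult_tensor ::
  "(('x \<times> 'x \<Rightarrow>\<^sub>0 'k::field) \<Rightarrow> ('x \<Rightarrow>\<^sub>0 'k)) \<Rightarrow> (('x \<times> 'x) \<times> ('x \<times> 'x) \<Rightarrow>\<^sub>0 'k) \<Rightarrow> ('x \<times> 'x \<Rightarrow>\<^sub>0 'k)" where
  "mult_tensor m = lin_ext (\<lambda>((x1, x2), (y1, y2)).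
      tens (m (tens (bvec x1) (bvec y1))) (m (tens (bvec x2) (bvec y2))))"

definition is_bialgebra ::
  "(('x \<times> 'x \<Rightarrow>\<^sub>0 'k::field) \<Rightarrow> ('x \<Rightarrow>\<^sub>0 'k)) \<Rightarrow> ('x \<Rightarrow>\<^sub>0 'k)
   \<Rightarrow> (('x \<Rightarrow>\<^sub>0 'k) \<Rightarrow> ('x \<times> 'x \<Rightarrow>\<^sub>0 'k)) \<Rightarrow> (('x \<Rightarrow>\<^sub>0 'k) \<Rightarrow> 'k) \<Rightarrow> bool" where
  "is_bialgebra m eta D eps \<longleftrightarrow> is_algebra m eta \<and> is_coalgebra D eps
     \<and> (\<forall>u v. D (m (tens u v)) = mult_tensor m (tens (D u) (D v)))
     \<and> D eta = tens eta eta
     \<and> (\<forall>u v. eps (m (tens u v)) = eps u * eps v)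
     \<and> eps eta = 1"

definition is_antipode ::
  "(('x \<times> 'x \<Rightarrow>\<^sub>0 'k::field) \<Rightarrow> ('x \<Rightarrow>\<^sub>0 'k)) \<Rightarrow> ('x \<Rightarrow>\<^sub>0 'k)
   \<Rightarrow> (('x \<Rightarrow>\<^sub>0 'k) \<Rightarrow> ('x \<times> 'x \<Rightarrow>\<^sub>0 'k)) \<Rightarrow> (('x \<Rightarrow>\<^sub>0 'k) \<Rightarrow> 'k)
   \<Rightarrow> (('x \<Rightarrow>\<^sub>0 'k) \<Rightarrow> ('x \<Rightarrow>\<^sub>0 'k)) \<Rightarrow> bool" where
  "is_antipode m eta D eps S \<longleftrightarrow> lin_map S
     \<and> (\<forall>u. m (tmap S id (D u)) = smul (eps u) eta)
     \<and> (\<forall>u. m (tmap id S (D u)) = smul (eps u) eta)"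

definition is_bimodule ::
  "(('x \<times> 'x \<Rightarrow>\<^sub>0 'k::field) \<Rightarrow> ('x \<Rightarrow>\<^sub>0 'k)) \<Rightarrow> ('x \<Rightarrow>\<^sub>0 'k)
   \<Rightarrow> (('x \<times> 'y \<Rightarrow>\<^sub>0 'k) \<Rightarrow> ('y \<Rightarrow>\<^sub>0 'k)) \<Rightarrow> (('y \<times> 'x \<Rightarrow>\<^sub>0 'k) \<Rightarrow> ('y \<Rightarrow>\<^sub>0 'k)) \<Rightarrow> bool" where
  "is_bimodule m eta la ra \<longleftrightarrow> lin_map la \<and> lin_map ra
     \<and> (\<forall>h h' a. la (tens h (la (tens h' a))) = la (tens (m (tens h h')) a))
     \<and> (\<forall>a. la (tens eta a) = a)
     \<and> (\<forall>h h' a. ra (tens (ra (tens a h)) h') = ra (tens a (m (tens h h'))))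
     \<and> (\<forall>a. ra (tens a eta) = a)
     \<and> (\<forall>h h' a. ra (tens (la (tens h a)) h') = la (tens h (ra (tens a h'))))"

text \<open>The induced H-bimodule structures (via the coproduct) on A \<otimes> H and H \<otimes> A.\<close>
definition left_AH where
  "left_AH m D la h p = lin_ext (\<lambda>(x1, x2). lin_ext (\<lambda>(y, x).
      tens (la (tens (bvec x1) (bvec y))) (m (tens (bvec x2) (bvec x)))) p) (D h)"

definition left_HA where
  "left_HA m D la h q = lin_ext (\<lambda>(x1, x2). lin_ext (\<lambda>(x, y).
      tens (m (tens (bvec x1) (bvec x))) (la (tens (bvec x2) (bvec y)))) q) (D h)"

definition right_AH where
  "right_AH m D ra p h = lin_ext (\<lambda>(x1, x2). lin_ext (\<lambda>(y, x).
      tens (ra (tens (bvec y) (bvec x1))) (m (tens (bvec x) (bvec x2)))) p) (D h)"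

definition right_HA where
  "right_HA m D ra q h = lin_ext (\<lambda>(x1, x2). lin_ext (\<lambda>(x, y).
      tens (m (tens (bvec x) (bvec x1))) (ra (tens (bvec y) (bvec x2)))) q) (D h)"

text \<open>Bialgebra in LM: (A --f--> H), with \<Delta>_1 : A \<rightarrow> A \<otimes> H \<oplus> H \<otimes> A.\<close>
definition is_bialgebra_LM ::
  "(('x \<times> 'x \<Rightarrow>\<^sub>0 'k::field) \<Rightarrow> ('x \<Rightarrow>\<^sub>0 'k)) \<Rightarrow> ('x \<Rightarrow>\<^sub>0 'k)
   \<Rightarrow> (('x \<Rightarrow>\<^sub>0 'k) \<Rightarrow> ('x \<times> 'x \<Rightarrow>\<^sub>0 'k)) \<Rightarrow> (('x \<Rightarrow>\<^sub>0 'k) \<Rightarrow> 'k)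
   \<Rightarrow> (('x \<times> 'y \<Rightarrow>\<^sub>0 'k) \<Rightarrow> ('y \<Rightarrow>\<^sub>0 'k)) \<Rightarrow> (('y \<times> 'x \<Rightarrow>\<^sub>0 'k) \<Rightarrow> ('y \<Rightarrow>\<^sub>0 'k))
   \<Rightarrow> (('y \<Rightarrow>\<^sub>0 'k) \<Rightarrow> ('x \<Rightarrow>\<^sub>0 'k))
   \<Rightarrow> (('y \<Rightarrow>\<^sub>0 'k) \<Rightarrow> ('y \<times> 'x \<Rightarrow>\<^sub>0 'k) \<times> ('x \<times> 'y \<Rightarrow>\<^sub>0 'k)) \<Rightarrow> bool" where
  "is_bialgebra_LM m eta D0 eps la ra f D1 \<longleftrightarrow>
     is_bialgebra m eta D0 eps \<and> is_bimodule m eta la ra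
     \<and> lin_map f
     \<and> (\<forall>h a. f (la (tens h a)) = m (tens h (f a)))
     \<and> (\<forall>h a. f (ra (tens a h)) = m (tens (f a) h))
     \<and> lin_map (\<lambda>a. fst (D1 a)) \<and> lin_map (\<lambda>a. snd (D1 a))
     \<and> (\<forall>h a. D1 (la (tens h a)) = (left_AH m D0 la h (fst (D1 a)), left_HA m D0 la h (snd (D1 a))))
     \<and> (\<forall>h a. D1 (ra (tens a h)) = (right_AH m D0 ra (fst (D1 a)) h, right_HA m D0 ra (snd (D1 a)) h))
     \<and> (\<forall>a. D0 (f a) = tmap f id (fst (D1 a)) + tmap id f (snd (D1 a)))"

definition is_hopf_LM where
  "is_hopf_LM m eta D0 eps la ra f D1 S0 S1 \<longleftrightarrow>
     is_bialgebra_LM m eta D0 eps la ra f D1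
     \<and> is_antipode m eta D0 eps S0
     \<and> lin_map S1
     \<and> (\<forall>a. f (S1 a) = S0 (f a))
     \<and> (\<forall>a. ra (tmap S1 id (fst (D1 a))) + la (tmap S0 id (snd (D1 a))) = 0)
     \<and> (\<forall>a. ra (tmap id S0 (fst (D1 a))) + la (tmap id S1 (snd (D1 a))) = 0)"

text \<open>Vertices: type 'g; arrows: type 'a; source s, target t; the morphism
\<mu> is given on vertices by mult and on arrows by the left action lact
(G \<times> A \<rightarrow> A) and the right action ract (A \<times> G \<rightarrow> A).\<close>
definition group_like_graph ::
  "('g \<Rightarrow> 'g \<Rightarrow> 'g) \<Rightarrow> 'g \<Rightarrow> ('g \<Rightarrow> 'g) \<Rightarrow> ('a \<Rightarrow> 'g) \<Rightarrow> ('a \<Rightarrow> 'g)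
   \<Rightarrow> ('g \<Rightarrow> 'a \<Rightarrow> 'a) \<Rightarrow> ('a \<Rightarrow> 'g \<Rightarrow> 'a) \<Rightarrow> bool" where
  "group_like_graph mult e ginv s t lact ract \<longleftrightarrow>
     group mult e ginv
     \<comment> \<open>\<mu> is a graph morphism\<close>
     \<and> (\<forall>g a. s (lact g a) = mult g (s a) \<and> t (lact g a) = mult g (t a))
     \<and> (\<forall>a g. s (ract a g) = mult (s a) g \<and> t (ract a g) = mult (t a) g)
     \<comment> \<open>\<mu> is associative\<close>
     \<and> (\<forall>a g h. ract (ract a g) h = ract a (mult g h))
     \<and> (\<forall>g a h. ract (lact g a) h = lact g (ract a h))
     \<and> (\<forall>g h a. lact (mult g h) a = lact g (lact h a))
     \<comment> \<open>unitality of the actions\<close>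
     \<and> (\<forall>a. lact e a = a \<and> ract a e = a)"

definition kG_mult :: "('g \<Rightarrow> 'g \<Rightarrow> 'g) \<Rightarrow> ('g \<times> 'g \<Rightarrow>\<^sub>0 'k::field) \<Rightarrow> ('g \<Rightarrow>\<^sub>0 'k)" where
  "kG_mult mult = lin_ext (\<lambda>(g, h). bvec (mult g h))"

definition kG_unit :: "'g \<Rightarrow> ('g \<Rightarrow>\<^sub>0 'k::field)" where
  "kG_unit e = bvec e"

definition kG_Delta0 :: "('g \<Rightarrow>\<^sub>0 'k::field) \<Rightarrow> ('g \<times> 'g \<Rightarrow>\<^sub>0 'k)" where
  "kG_Delta0 = lin_ext (\<lambda>g. bvec (g, g))"

definition kG_counit :: "('g \<Rightarrow>\<^sub>0 'k::field) \<Rightarrow> 'k" where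
  "kG_counit = lin_ext_scalar (\<lambda>g. 1)"

definition kA_lact :: "('g \<Rightarrow> 'a \<Rightarrow> 'a) \<Rightarrow> ('g \<times> 'a \<Rightarrow>\<^sub>0 'k::field) \<Rightarrow> ('a \<Rightarrow>\<^sub>0 'k)" where
  "kA_lact lact = lin_ext (\<lambda>(g, a). bvec (lact g a))"

definition kA_ract :: "('a \<Rightarrow> 'g \<Rightarrow> 'a) \<Rightarrow> ('a \<times> 'g \<Rightarrow>\<^sub>0 'k::field) \<Rightarrow> ('a \<Rightarrow>\<^sub>0 'k)" where
  "kA_ract ract = lin_ext (\<lambda>(a, g). bvec (ract a g))"

definition kA_phi :: "('a \<Rightarrow> 'g) \<Rightarrow> ('a \<Rightarrow> 'g) \<Rightarrow> ('a \<Rightarrow>\<^sub>0 'k::field) \<Rightarrow> ('g \<Rightarrow>\<^sub>0 'k)" where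
  "kA_phi s t = lin_ext (\<lambda>a. bvec (t a) - bvec (s a))"

definition kA_Delta1 :: "('a \<Rightarrow> 'g) \<Rightarrow> ('a \<Rightarrow> 'g) \<Rightarrow> ('a \<Rightarrow>\<^sub>0 'k::field)
    \<Rightarrow> ('a \<times> 'g \<Rightarrow>\<^sub>0 'k) \<times> ('g \<times> 'a \<Rightarrow>\<^sub>0 'k)" where
  "kA_Delta1 s t v = (lin_ext (\<lambda>a. bvec (a, t a)) v, lin_ext (\<lambda>a. bvec (s a, a)) v)"

definition kG_S0 :: "('g \<Rightarrow> 'g) \<Rightarrow> ('g \<Rightarrow>\<^sub>0 'k::field) \<Rightarrow> ('g \<Rightarrow>\<^sub>0 'k)" where
  "kG_S0 ginv = lin_ext (\<lambda>g. bvec (ginv g))"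

definition kA_S1 :: "('g \<Rightarrow> 'g) \<Rightarrow> ('a \<Rightarrow> 'g) \<Rightarrow> ('a \<Rightarrow> 'g) \<Rightarrow> ('g \<Rightarrow> 'a \<Rightarrow> 'a) \<Rightarrow> ('a \<Rightarrow> 'g \<Rightarrow> 'a)
    \<Rightarrow> ('a \<Rightarrow>\<^sub>0 'k::field) \<Rightarrow> ('a \<Rightarrow>\<^sub>0 'k)" where
  "kA_S1 ginv s t lact ract = lin_ext (\<lambda>a. - bvec (ract (lact (ginv (s a)) a) (ginv (t a))))"

end

theory Submission
  imports Defs
begin


lemma lookup_smul[simp]: "Poly_Mapping.lookup (smul c u) x = c * Poly_Mapping.lookup u x"
  by (simp add: smul_def Poly_Mapping.map.rep_eq when_def)

lemma keys_smul_sub: "Poly_Mapping.keys (smul c u) \<subseteq> Poly_Mapping.keys u"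
  by (auto simp: in_keys_iff)

lemma lookup_bvec: "Poly_Mapping.lookup (bvec x) y = (if x = y then 1 else 0)"
  by (simp add: bvec_def lookup_single when_def)

lemma keys_bvec[simp]: "Poly_Mapping.keys (bvec x :: _ \<Rightarrow>\<^sub>0 'k::field) = {x}"
  by (simp add: bvec_def)

lemma lookup_lin_ext: "Poly_Mapping.lookup (lin_ext b v) y
   = (\<Sum>x\<in>Poly_Mapping.keys v. Poly_Mapping.lookup v x * Poly_Mapping.lookup (b x) y)"
  by (simp add: lin_ext_def lookup_sum)

lemma lookup_lin_ext_sup:
  assumes "finite S" "Poly_Mapping.keys v \<subseteq> S"
  shows "Poly_Mapping.lookup (lin_ext b v) y
   = (\<Sum>x\<in>S. Poly_Mapping.lookup v x * Poly_Mapping.lookup (b x) y)"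
  unfolding lookup_lin_ext
  by (rule sum.mono_neutral_left) (use assms in \<open>auto simp: in_keys_iff\<close>)

lemma lin_map_lin_ext[simp, intro]:
  fixes b :: "'a \<Rightarrow> ('b \<Rightarrow>\<^sub>0 'k::field)"
  shows "lin_map (lin_ext b)"
  unfolding lin_map_def
proof (intro conjI allI)
  fix u v :: "'a \<Rightarrow>\<^sub>0 'k"
  let ?S = "Poly_Mapping.keys u \<union> Poly_Mapping.keys v"
  have f: "finite ?S" by simp
  have k1: "Poly_Mapping.keys u \<subseteq> ?S" and k2: "Poly_Mapping.keys v \<subseteq> ?S" by auto
  have k3: "Poly_Mapping.keys (u + v) \<subseteq> ?S" by (rule keys_add)
  show "lin_ext b (u + v) = lin_ext b u + lin_ext b v"
    apply (rule poly_mapping_eqI)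
    apply (simp only: lookup_add)
    apply (simp only: lookup_lin_ext_sup[OF f k1] lookup_lin_ext_sup[OF f k2] lookup_lin_ext_sup[OF f k3])
    apply (simp add: lookup_add distrib_right sum.distrib)
    done
next
  fix c and u :: "'a \<Rightarrow>\<^sub>0 'k"
  show "lin_ext b (smul c u) = smul c (lin_ext b u)"
    apply (rule poly_mapping_eqI)
    apply (subst lookup_lin_ext_sup[where S="Poly_Mapping.keys u"])
    apply (simp_all add: keys_smul_sub lookup_lin_ext sum_distrib_left mult.assoc)
    done
qed

lemma if_and0: "(if A \<and> B then f else 0) = (if A then (if B then f else 0) else 0)" by simp

lemma lookup_tens: "Poly_Mapping.lookup (tens u v) p = Poly_Mapping.lookup u (fst p) * Poly_Mapping.lookup v (snd p)"
proof -
  obtain x y where p: "p = (x, y)" by (cases p)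
  have "Poly_Mapping.lookup (tens u v) p = (\<Sum>x'\<in>Poly_Mapping.keys u. \<Sum>y'\<in>Poly_Mapping.keys v.
      (if x' = x then (if y' = y then Poly_Mapping.lookup u x' * Poly_Mapping.lookup v y' else 0) else 0))"
    by (simp only: tens_def lookup_sum lookup_single when_def p prod.inject if_and0)
  also have "\<dots> = (\<Sum>x'\<in>Poly_Mapping.keys u. if x' = x then (\<Sum>y'\<in>Poly_Mapping.keys v.
      (if y' = y then Poly_Mapping.lookup u x' * Poly_Mapping.lookup v y' else 0)) else 0)"
    by (rule sum.cong) auto
  also have "\<dots> = Poly_Mapping.lookup u x * Poly_Mapping.lookup v y"
    by (simp only: sum.delta' sum.delta finite_keys) (auto simp: in_keys_iff)
  finally show ?thesis by (simp add: p)
qed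

lemma tens_bvec[simp]: "tens (bvec x) (bvec y) = (bvec (x, y) :: _ \<Rightarrow>\<^sub>0 'k::field)"
  by (rule poly_mapping_eqI) (auto simp: lookup_tens lookup_bvec)

lemma lin_ext_bvec[simp]: "lin_ext b (bvec x) = b x"
  by (rule poly_mapping_eqI) (simp add: lookup_lin_ext lookup_bvec)

lemma tens_add1: "tens (u + u') v = tens u v + tens u' v"
  by (rule poly_mapping_eqI) (simp add: lookup_tens lookup_add distrib_right)
lemma tens_add2: "tens u (v + v') = tens u v + tens u v'"
  by (rule poly_mapping_eqI) (simp add: lookup_tens lookup_add distrib_left)
lemma tens_smul1: "tens (smul c u) v = smul c (tens u v)"
  by (rule poly_mapping_eqI) (simp add: lookup_tens mult.assoc)
lemma tens_smul2: "tens u (smul c v) = smul c (tens u v)"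
  by (rule poly_mapping_eqI) (simp add: lookup_tens mult.left_commute)

lemma lin_map_zero: "lin_map F \<Longrightarrow> F 0 = 0"
proof -
  assume a: "lin_map F"
  have "F 0 = F (0 + 0)" by simp
  also have "\<dots> = F 0 + F 0" using a by (simp only: lin_map_def)
  finally show ?thesis by simp
qed
lemma lin_map_uminus: "lin_map F \<Longrightarrow> F (- u) = - F u"
proof -
  assume a: "lin_map F"
  have "F (- u) + F u = F (- u + u)" using a by (simp only: lin_map_def)
  also have "\<dots> = 0" using lin_map_zero[OF a] by simp
  finally show ?thesis by (simp add: eq_neg_iff_add_eq_0)
qed
lemma lin_map_diff: "lin_map F \<Longrightarrow> F (u - v) = F u - F v"
proof -
  assume a: "lin_map F"
  have "F (u - v) = F (u + - v)" by simp
  also have "\<dots> = F u + F (- v)" using a by (simp only: lin_map_def)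
  finally show ?thesis using lin_map_uminus[OF a] by simp
qed

lemma decomp: "v = (\<Sum>x\<in>Poly_Mapping.keys v. Poly_Mapping.single x (Poly_Mapping.lookup v x))"
  by (rule poly_mapping_eqI) (simp add: lookup_sum lookup_single when_def sum.delta in_keys_iff)

lemma single_smul: "Poly_Mapping.single x c = smul c (bvec x :: _ \<Rightarrow>\<^sub>0 'k::field)"
  by (rule poly_mapping_eqI) (simp add: lookup_single lookup_bvec when_def)

lemma add_sum:
  fixes F :: "'x::comm_monoid_add \<Rightarrow> 'b::ab_group_add"
  assumes "\<forall>u v. F (u + v) = F u + F v" "finite S"
  shows "F (sum f S) = (\<Sum>x\<in>S. F (f x))"
  using assms(2)
proof (induction S rule: finite_induct)
  case empty
  have "F 0 = F 0 + F 0" using assms(1) by (metis add_0)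
  then show ?case by simp
next
  case (insert x S) then show ?case using assms(1) by simp
qed

lemma lin_eq_gen:
  fixes F G :: "('x \<Rightarrow>\<^sub>0 'k::field) \<Rightarrow> 'b::ab_group_add"
  assumes "\<forall>u v. F (u + v) = F u + F v" "\<forall>u v. G (u + v) = G u + G v"
    "\<And>x c. F (Poly_Mapping.single x c) = G (Poly_Mapping.single x c)"
  shows "F v = G v"
  by (subst (1 2) decomp) (simp add: add_sum[OF assms(1)] add_sum[OF assms(2)] assms(3))

lemma lin_eq:
  assumes "lin_map F" "lin_map G" "\<And>x. F (bvec x) = G (bvec x)"
  shows "F v = G v"
  apply (rule lin_eq_gen[where F=F and G=G])
  using assms by (auto simp: lin_map_def single_smul)

definition slin :: "(('x \<Rightarrow>\<^sub>0 'k::field) \<Rightarrow> 'k) \<Rightarrow> bool" where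
  "slin E \<longleftrightarrow> (\<forall>u v. E (u + v) = E u + E v) \<and> (\<forall>c u. E (smul c u) = c * E u)"

lemma slin_eq:
  assumes "slin F" "slin G" "\<And>x. F (bvec x) = G (bvec x)"
  shows "F v = G v"
  apply (rule lin_eq_gen[where F=F and G=G])
  using assms by (auto simp: slin_def single_smul)


lemma lm_id: "lin_map (\<lambda>u. u)" by (simp add: lin_map_def)

lemma lm_app: "lin_map F \<Longrightarrow> lin_map G \<Longrightarrow> lin_map (\<lambda>u. F (G u))"
  by (simp add: lin_map_def)

lemma smul_add: "smul c (u + v) = smul c u + smul c v"
  by (rule poly_mapping_eqI) (simp add: lookup_add distrib_left)
lemma smul_smul: "smul c (smul d u) = smul (c * d) u"
  by (rule poly_mapping_eqI) (simp add: mult.assoc)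
lemma smul_add_left: "smul (c + d) u = smul c u + smul d u"
  by (rule poly_mapping_eqI) (simp add: lookup_add distrib_right)
lemma smul_one[simp]: "smul 1 u = u"
  by (rule poly_mapping_eqI) simp
lemma smul_minus: "smul c (- u) = - smul c u"
  by (rule poly_mapping_eqI) simp

lemma lm_tens1: "lin_map F \<Longrightarrow> lin_map (\<lambda>u. tens (F u) c)"
  by (simp add: lin_map_def tens_add1 tens_smul1)
lemma lm_tens2: "lin_map F \<Longrightarrow> lin_map (\<lambda>u. tens c (F u))"
  by (simp add: lin_map_def tens_add2 tens_smul2)
lemma lm_add: "lin_map F \<Longrightarrow> lin_map G \<Longrightarrow> lin_map (\<lambda>u. F u + G u)"
  by (simp add: lin_map_def smul_add)
lemma lm_uminus: "lin_map F \<Longrightarrow> lin_map (\<lambda>u. - F u)"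
  by (simp add: lin_map_def smul_minus)
lemma lm_diff: "lin_map F \<Longrightarrow> lin_map G \<Longrightarrow> lin_map (\<lambda>u. F u - G u)"
  using lm_add[OF _ lm_uminus, of F G] by simp
lemma lm_smul_s: "slin E \<Longrightarrow> lin_map (\<lambda>u. smul (E u) w)"
  by (simp add: lin_map_def slin_def smul_add_left smul_smul)

lemma lm_lin_ext_param:
  assumes "\<And>z. lin_map (\<lambda>p. \<Phi> p z)"
  shows "lin_map (\<lambda>p. lin_ext (\<Phi> p) w)"
  unfolding lin_map_def
proof (intro conjI allI)
  fix u v
  show "lin_ext (\<Phi> (u + v)) w = lin_ext (\<Phi> u) w + lin_ext (\<Phi> v) w"
    using assms unfolding lin_map_def
    by (intro poly_mapping_eqI) (simp add: lookup_lin_ext lookup_add distrib_left sum.distrib)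
next
  fix c u
  show "lin_ext (\<Phi> (smul c u)) w = smul c (lin_ext (\<Phi> u) w)"
    using assms unfolding lin_map_def
    by (intro poly_mapping_eqI) (simp add: lookup_lin_ext sum_distrib_left mult.left_commute)
qed

lemma lm_case: "(\<And>a b. lin_map (\<lambda>p. f a b p)) \<Longrightarrow> lin_map (\<lambda>p. case z of (a, b) \<Rightarrow> f a b p)"
  by (cases z) simp

lemma lin_ext_scalar_sup:
  assumes "finite S" "Poly_Mapping.keys v \<subseteq> S"
  shows "lin_ext_scalar b v = (\<Sum>x\<in>S. Poly_Mapping.lookup v x * b x)"
  unfolding lin_ext_scalar_def
  by (rule sum.mono_neutral_left) (use assms in \<open>auto simp: in_keys_iff\<close>)

lemma slin_counit: "slin (kG_counit :: ('g \<Rightarrow>\<^sub>0 'k::field) \<Rightarrow> 'k)"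
  unfolding slin_def kG_counit_def
proof (intro conjI allI)
  fix u v :: "'g \<Rightarrow>\<^sub>0 'k"
  let ?S = "Poly_Mapping.keys u \<union> Poly_Mapping.keys v"
  have f: "finite ?S" by simp
  have k: "Poly_Mapping.keys (u + v) \<subseteq> ?S" by (rule keys_add)
  show "lin_ext_scalar (\<lambda>g. 1) (u + v) = lin_ext_scalar (\<lambda>g. 1) u + lin_ext_scalar (\<lambda>g. 1) v"
    by (simp only: lin_ext_scalar_sup[OF f k] lin_ext_scalar_sup[OF f Un_upper1] lin_ext_scalar_sup[OF f Un_upper2])
       (simp add: lookup_add sum.distrib)
next
  fix c and u :: "'g \<Rightarrow>\<^sub>0 'k"
  show "lin_ext_scalar (\<lambda>g. 1) (smul c u) = c * lin_ext_scalar (\<lambda>g. 1) u"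
    by (simp only: lin_ext_scalar_sup[OF finite_keys keys_smul_sub])
       (simp add: lin_ext_scalar_def sum_distrib_left)
qed

lemma counit_bvec[simp]: "kG_counit (bvec x :: _ \<Rightarrow>\<^sub>0 'k::field) = (1::'k)"
  by (simp add: kG_counit_def lin_ext_scalar_def lookup_bvec)

lemma sl_comp: "slin E \<Longrightarrow> lin_map F \<Longrightarrow> slin (\<lambda>u. E (F u))"
  by (simp add: slin_def lin_map_def)
lemma sl_mult1: "slin E \<Longrightarrow> slin (\<lambda>u. E u * c)"
  by (simp add: slin_def distrib_right mult.assoc)
lemma sl_mult2: "slin E \<Longrightarrow> slin (\<lambda>u. c * E u)"
  by (simp add: slin_def distrib_left mult.left_commute)

lemma lin_eq2:
  assumes "\<And>v. lin_map (\<lambda>u. F u v)" "\<And>v. lin_map (\<lambda>u. G u v)"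
    "\<And>u. lin_map (\<lambda>v. F u v)" "\<And>u. lin_map (\<lambda>v. G u v)"
    "\<And>x y. F (bvec x) (bvec y) = G (bvec x) (bvec y)"
  shows "F u v = G u v"
proof -
  have B: "\<And>x. F (bvec x) v = G (bvec x) v"
    by (rule lin_eq[where F="F (bvec _)"]) (use assms in auto)
  show ?thesis by (rule lin_eq[where F="\<lambda>u. F u v"]) (use assms B in auto)
qed

lemma lin_eq3:
  assumes "\<And>v w. lin_map (\<lambda>u. F u v w)" "\<And>v w. lin_map (\<lambda>u. G u v w)"
    "\<And>u w. lin_map (\<lambda>v. F u v w)" "\<And>u w. lin_map (\<lambda>v. G u v w)"
    "\<And>u v. lin_map (\<lambda>w. F u v w)" "\<And>u v. lin_map (\<lambda>w. G u v w)"
    "\<And>x y z. F (bvec x) (bvec y) (bvec z) = G (bvec x) (bvec y) (bvec z)"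
  shows "F u v w = G u v w"
proof -
  have B1: "\<And>x y. F (bvec x) (bvec y) w = G (bvec x) (bvec y) w"
    by (rule lin_eq[where F="F (bvec _) (bvec _)"]) (use assms in auto)
  have B2: "\<And>x. F (bvec x) v w = G (bvec x) v w"
    by (rule lin_eq[where F="\<lambda>v. F (bvec _) v w"]) (use assms B1 in auto)
  show ?thesis by (rule lin_eq[where F="\<lambda>u. F u v w"]) (use assms B2 in auto)
qed

lemma slin_eq2:
  assumes "\<And>v. slin (\<lambda>u. F u v)" "\<And>v. slin (\<lambda>u. G u v)"
    "\<And>u. slin (\<lambda>v. F u v)" "\<And>u. slin (\<lambda>v. G u v)"
    "\<And>x y. F (bvec x) (bvec y) = G (bvec x) (bvec y)"
  shows "F u v = G u v"
proof -
  have B: "\<And>x. F (bvec x) v = G (bvec x) v"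
    by (rule slin_eq[where F="F (bvec _)"]) (use assms in auto)
  show ?thesis by (rule slin_eq[where F="\<lambda>u. F u v"]) (use assms B in auto)
qed



lemma lm_const[simp]:
  "lin_map (kG_mult mult)" "lin_map kG_Delta0" "lin_map (kA_lact lact)" "lin_map (kA_ract ract)"
  "lin_map (kA_phi s t)" "lin_map (kG_S0 ginv)" "lin_map (kA_S1 ginv s t lact ract)"
  "lin_map (tmap A B)" "lin_map reassoc" "lin_map (mult_tensor m)"
  by (simp_all add: kG_mult_def kG_Delta0_def kA_lact_def kA_ract_def kA_phi_def kG_S0_def
      kA_S1_def tmap_def reassoc_def mult_tensor_def)

lemmas lm_apps = lm_app[OF lm_const(1)] lm_app[OF lm_const(2)] lm_app[OF lm_const(3)]
  lm_app[OF lm_const(4)] lm_app[OF lm_const(5)] lm_app[OF lm_const(6)] lm_app[OF lm_const(7)]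
  lm_app[OF lm_const(8)] lm_app[OF lm_const(9)] lm_app[OF lm_const(10)]
  lm_app[OF lin_map_lin_ext]

lemmas lm_rules = lm_id lm_apps lm_tens1 lm_tens2 lm_add lm_diff lm_uminus lm_lin_ext_param lm_case

lemma ev[simp]:
  "kG_mult mult (bvec (x, y)) = bvec (mult x y)"
  "kG_Delta0 (bvec g) = bvec (g, g)"
  "kA_lact lact (bvec (g, a)) = bvec (lact g a)"
  "kA_ract ract (bvec (a, g)) = bvec (ract a g)"
  "kA_phi s t (bvec a) = bvec (t a) - bvec (s a)"
  "fst (kA_Delta1 s t v) = lin_ext (\<lambda>a. bvec (a, t a)) v"
  "snd (kA_Delta1 s t v) = lin_ext (\<lambda>a. bvec (s a, a)) v"
  "kG_S0 ginv (bvec g) = bvec (ginv g)"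
  "kA_S1 ginv s t lact ract (bvec a) = - bvec (ract (lact (ginv (s a)) a) (ginv (t a)))"
  by (simp_all add: kG_mult_def kG_Delta0_def kA_lact_def kA_ract_def kA_phi_def kG_S0_def
      kA_S1_def tmap_def reassoc_def mult_tensor_def kA_Delta1_def)

lemma ev2[simp]: "tmap F F' (bvec (x, y)) = tens (F (bvec x)) (F' (bvec y))"
  by (simp add: tmap_def)
lemma ev3[simp]: "reassoc (bvec ((x, y), z)) = bvec (x, (y, z))"
  by (simp add: reassoc_def)
lemma ev4[simp]: "mult_tensor m (bvec ((x1, x2), (y1, y2))) = tens (m (tens (bvec x1) (bvec y1))) (m (tens (bvec x2) (bvec y2)))"
  by (simp add: mult_tensor_def)

lemma tens_minus:
  "tens (- u) v = - tens u v" "tens u (- v) = - tens u v"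
  "tens (u - u') v = tens u v - tens u' v" "tens u (v - v') = tens u v - tens u v'"
  by (rule poly_mapping_eqI, simp add: lookup_tens lookup_minus algebra_simps)+

lemmas lin_simps[simp] = lin_map_diff[OF lm_const(1)] lin_map_diff[OF lm_const(2)]
  lin_map_diff[OF lm_const(3)] lin_map_diff[OF lm_const(4)] lin_map_diff[OF lm_const(5)]
  lin_map_diff[OF lm_const(6)] lin_map_diff[OF lm_const(7)]
  lin_map_uminus[OF lm_const(1)] lin_map_uminus[OF lm_const(2)]
  lin_map_uminus[OF lm_const(3)] lin_map_uminus[OF lm_const(4)] lin_map_uminus[OF lm_const(5)]
  lin_map_uminus[OF lm_const(6)] lin_map_uminus[OF lm_const(7)]
  tens_minus

lemma lm_zero: "lin_map (\<lambda>u. 0)" unfolding lin_map_def by (auto intro: poly_mapping_eqI)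

lemmas sl_rules = sl_comp[OF slin_counit] sl_mult1[OF slin_counit] sl_mult2[OF slin_counit]
  lm_smul_s[OF slin_counit]

context
  fixes mult :: "'g \<Rightarrow> 'g \<Rightarrow> 'g" and e :: 'g and ginv :: "'g \<Rightarrow> 'g"
    and s t :: "'a \<Rightarrow> 'g" and lact :: "'g \<Rightarrow> 'a \<Rightarrow> 'a" and ract :: "'a \<Rightarrow> 'g \<Rightarrow> 'a"
  assumes glg: "group_like_graph mult e ginv s t lact ract"
begin

lemma grp: "group mult e ginv" using glg by (simp add: group_like_graph_def)
lemma G[simp]: "mult (mult a b) c = mult a (mult b c)" "mult e a = a" "mult a e = a"
  "mult (ginv a) a = e" "mult a (ginv a) = e"
proof -
  interpret group mult e ginv by (rule grp)
  show "mult (mult a b) c = mult a (mult b c)" "mult e a = a" "mult a e = a"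
    "mult (ginv a) a = e" "mult a (ginv a) = e" by (simp_all add: assoc)
qed
lemma GL[simp]: "s (lact g a) = mult g (s a)" "t (lact g a) = mult g (t a)"
  "s (ract a g) = mult (s a) g" "t (ract a g) = mult (t a) g"
  "ract (ract a g) h = ract a (mult g h)" "ract (lact g a) h = lact g (ract a h)"
  "lact g (lact h a) = lact (mult g h) a" "lact e a = a" "ract a e = a"
  using glg by (simp_all add: group_like_graph_def)

lemma G2[simp]: "mult a (mult (ginv a) b) = b" "mult (ginv a) (mult a b) = b"
  by (simp_all flip: G(1))


abbreviation "mm \<equiv> (kG_mult mult :: ('g \<times> 'g \<Rightarrow>\<^sub>0 'k::field) \<Rightarrow> _)"

lemma alg_assoc: "mm (tens (mm (tens u v)) w) = mm (tens u (mm (tens v w)))"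
  by (rule lin_eq3[of "\<lambda>u v w. mm (tens (mm (tens u v)) w)" "\<lambda>u v w. mm (tens u (mm (tens v w)))"];
      (intro lm_rules)?; simp)

lemma alg_unit1: "mm (tens (kG_unit e) u) = u"
  unfolding kG_unit_def
  by (rule lin_eq[of "\<lambda>u. mm (tens (bvec e) u)" "\<lambda>u. u"]; (intro lm_rules)?; simp)

lemma alg_unit2: "mm (tens u (kG_unit e)) = u"
  unfolding kG_unit_def
  by (rule lin_eq[of "\<lambda>u. mm (tens u (bvec e))" "\<lambda>u. u"]; (intro lm_rules)?; simp)

lemma is_alg: "is_algebra mm (kG_unit e)"
  unfolding is_algebra_def by (intro conjI allI lm_const alg_assoc alg_unit1 alg_unit2)


abbreviation "DD \<equiv> (kG_Delta0 :: ('g \<Rightarrow>\<^sub>0 'k::field) \<Rightarrow> _)"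
abbreviation "la \<equiv> (kA_lact lact :: ('g \<times> 'a \<Rightarrow>\<^sub>0 'k::field) \<Rightarrow> _)"
abbreviation "ra \<equiv> (kA_ract ract :: ('a \<times> 'g \<Rightarrow>\<^sub>0 'k::field) \<Rightarrow> _)"
abbreviation "ph \<equiv> (kA_phi s t :: ('a \<Rightarrow>\<^sub>0 'k::field) \<Rightarrow> _)"
abbreviation "S0 \<equiv> (kG_S0 ginv :: ('g \<Rightarrow>\<^sub>0 'k::field) \<Rightarrow> _)"
abbreviation "S1 \<equiv> (kA_S1 ginv s t lact ract :: ('a \<Rightarrow>\<^sub>0 'k::field) \<Rightarrow> _)"
abbreviation "D1 \<equiv> (kA_Delta1 s t :: ('a \<Rightarrow>\<^sub>0 'k::field) \<Rightarrow> _)"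

lemma coassoc: "reassoc (tmap DD id (DD u)) = tmap id DD (DD u)"
  by (rule lin_eq[of "\<lambda>u. reassoc (tmap DD id (DD u))" "\<lambda>u. tmap id DD (DD u)"]; (intro lm_rules)?; simp)

lemma counit1: "lin_ext (\<lambda>(x, y). smul (kG_counit (bvec x)) (bvec y)) (DD u) = u"
  by (rule lin_eq[of "\<lambda>u. lin_ext (\<lambda>(x, y). smul (kG_counit (bvec x)) (bvec y)) (DD u)" "\<lambda>u. u"];
      (intro lm_rules)?; simp)

lemma counit2: "lin_ext (\<lambda>(x, y). smul (kG_counit (bvec y)) (bvec x)) (DD u) = u"
  by (rule lin_eq[of "\<lambda>u. lin_ext (\<lambda>(x, y). smul (kG_counit (bvec y)) (bvec x)) (DD u)" "\<lambda>u. u"];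
      (intro lm_rules)?; simp)

lemma is_coalg: "is_coalgebra DD kG_counit"
  unfolding is_coalgebra_def using slin_counit unfolding slin_def
  by (intro conjI allI lm_const coassoc counit1 counit2) auto

lemma bi1: "DD (mm (tens u v)) = mult_tensor mm (tens (DD u) (DD v))"
  by (rule lin_eq2[of "\<lambda>u v. DD (mm (tens u v))" "\<lambda>u v. mult_tensor mm (tens (DD u) (DD v))"];
      (intro lm_rules)?; simp)

lemma bi2: "kG_counit (mm (tens u v)) = kG_counit u * kG_counit v"
  by (rule slin_eq2[of "\<lambda>u v. kG_counit (mm (tens u v))" "\<lambda>u v. kG_counit u * kG_counit v"];
      (intro sl_rules lm_rules)?; simp)

lemma is_bialg: "is_bialgebra mm (kG_unit e) DD kG_counit"
  unfolding is_bialgebra_def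
  by (intro conjI allI is_alg is_coalg bi1 bi2) (simp_all add: kG_unit_def)

lemma bm1: "la (tens h (la (tens h' a))) = la (tens (mm (tens h h')) a)"
  by (rule lin_eq3[of "\<lambda>h h' a. la (tens h (la (tens h' a)))" "\<lambda>h h' a. la (tens (mm (tens h h')) a)"];
      (intro lm_rules)?; simp)
lemma bm2: "la (tens (kG_unit e) a) = a"
  unfolding kG_unit_def
  by (rule lin_eq[of "\<lambda>a. la (tens (bvec e) a)" "\<lambda>a. a"]; (intro lm_rules)?; simp)
lemma bm3: "ra (tens (ra (tens a h)) h') = ra (tens a (mm (tens h h')))"
  by (rule lin_eq3[of "\<lambda>a h h'. ra (tens (ra (tens a h)) h')" "\<lambda>a h h'. ra (tens a (mm (tens h h')))"];
      (intro lm_rules)?; simp)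
lemma bm4: "ra (tens a (kG_unit e)) = a"
  unfolding kG_unit_def
  by (rule lin_eq[of "\<lambda>a. ra (tens a (bvec e))" "\<lambda>a. a"]; (intro lm_rules)?; simp)
lemma bm5: "ra (tens (la (tens h a)) h') = la (tens h (ra (tens a h')))"
  by (rule lin_eq3[of "\<lambda>h a h'. ra (tens (la (tens h a)) h')" "\<lambda>h a h'. la (tens h (ra (tens a h')))"];
      (intro lm_rules)?; simp)

lemma is_bimod: "is_bimodule mm (kG_unit e) la ra"
  unfolding is_bimodule_def
  by (intro conjI allI lm_const bm1 bm2 bm3 bm4 bm5)

lemma lm1: "ph (la (tens h a)) = mm (tens h (ph a))"
  by (rule lin_eq2[of "\<lambda>h a. ph (la (tens h a))" "\<lambda>h a. mm (tens h (ph a))"];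
      (intro lm_rules)?; simp)
lemma lm2: "ph (ra (tens a h)) = mm (tens (ph a) h)"
  by (rule lin_eq2[of "\<lambda>a h. ph (ra (tens a h))" "\<lambda>a h. mm (tens (ph a) h)"];
      (intro lm_rules)?; simp)

lemma lm3: "lin_ext (\<lambda>a. bvec (a, t a)) (la (tens h a)) = left_AH mm DD la h (lin_ext (\<lambda>a. bvec (a, t a)) a)"
  unfolding left_AH_def
  by (rule lin_eq2[of "\<lambda>h a. lin_ext (\<lambda>a. bvec (a, t a)) (la (tens h a))"
      "\<lambda>h a. lin_ext (\<lambda>(x1, x2). lin_ext (\<lambda>(y, x).
      tens (la (tens (bvec x1) (bvec y))) (mm (tens (bvec x2) (bvec x)))) (lin_ext (\<lambda>a. bvec (a, t a)) a)) (DD h)"];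
      (intro lm_rules)?; simp)


lemma lm4: "lin_ext (\<lambda>a. bvec (s a, a)) (la (tens h a)) = left_HA mm DD la h (lin_ext (\<lambda>a. bvec (s a, a)) a)"
  unfolding left_HA_def
  by (rule lin_eq2[of "\<lambda>h a. lin_ext (\<lambda>a. bvec (s a, a)) (la (tens h a))"
      "\<lambda>h a. lin_ext (\<lambda>(x1, x2). lin_ext (\<lambda>(x, y).
      tens (mm (tens (bvec x1) (bvec x))) (la (tens (bvec x2) (bvec y)))) (lin_ext (\<lambda>a. bvec (s a, a)) a)) (DD h)"];
      (intro lm_rules)?; simp)

lemma lm5: "lin_ext (\<lambda>a. bvec (a, t a)) (ra (tens a h)) = right_AH mm DD ra (lin_ext (\<lambda>a. bvec (a, t a)) a) h"
  unfolding right_AH_def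
  by (rule lin_eq2[of "\<lambda>a h. lin_ext (\<lambda>a. bvec (a, t a)) (ra (tens a h))"
      "\<lambda>a h. lin_ext (\<lambda>(x1, x2). lin_ext (\<lambda>(y, x).
      tens (ra (tens (bvec y) (bvec x1))) (mm (tens (bvec x) (bvec x2)))) (lin_ext (\<lambda>a. bvec (a, t a)) a)) (DD h)"];
      (intro lm_rules)?; simp)

lemma lm6: "lin_ext (\<lambda>a. bvec (s a, a)) (ra (tens a h)) = right_HA mm DD ra (lin_ext (\<lambda>a. bvec (s a, a)) a) h"
  unfolding right_HA_def
  by (rule lin_eq2[of "\<lambda>a h. lin_ext (\<lambda>a. bvec (s a, a)) (ra (tens a h))"
      "\<lambda>a h. lin_ext (\<lambda>(x1, x2). lin_ext (\<lambda>(x, y).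
      tens (mm (tens (bvec x) (bvec x1))) (ra (tens (bvec y) (bvec x2)))) (lin_ext (\<lambda>a. bvec (s a, a)) a)) (DD h)"];
      (intro lm_rules)?; simp)

lemma lm7: "DD (ph a) = tmap ph id (fst (D1 a)) + tmap id ph (snd (D1 a))"
  unfolding ev
  by (rule lin_eq[of "\<lambda>a. DD (ph a)" "\<lambda>a. tmap ph id (lin_ext (\<lambda>a. bvec (a, t a)) a) + tmap id ph (lin_ext (\<lambda>a. bvec (s a, a)) a)"];
      (intro lm_rules)?; simp)

lemma is_bialgLM: "is_bialgebra_LM mm (kG_unit e) DD kG_counit la ra ph D1"
  unfolding is_bialgebra_LM_def
  apply (intro conjI allI is_bialg is_bimod lm_const lm1 lm2 lm7)
  by (simp_all add: lm3 lm4 lm5 lm6 kA_Delta1_def)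

lemma ap1: "mm (tmap S0 id (DD u)) = smul (kG_counit u) (kG_unit e)"
  unfolding kG_unit_def
  by (rule lin_eq[of "\<lambda>u. mm (tmap S0 id (DD u))" "\<lambda>u. smul (kG_counit u) (bvec e)"];
      (intro sl_rules lm_rules)?; simp)
lemma ap2: "mm (tmap id S0 (DD u)) = smul (kG_counit u) (kG_unit e)"
  unfolding kG_unit_def
  by (rule lin_eq[of "\<lambda>u. mm (tmap id S0 (DD u))" "\<lambda>u. smul (kG_counit u) (bvec e)"];
      (intro sl_rules lm_rules)?; simp)

lemma is_ap: "is_antipode mm (kG_unit e) DD kG_counit S0"
  unfolding is_antipode_def by (intro conjI allI lm_const ap1 ap2)

lemma h1: "ph (S1 a) = S0 (ph a)"
  by (rule lin_eq[of "\<lambda>a. ph (S1 a)" "\<lambda>a. S0 (ph a)"]; (intro lm_rules)?; simp)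

lemma h2: "ra (tmap S1 id (fst (D1 a))) + la (tmap S0 id (snd (D1 a))) = 0"
  unfolding ev
  by (rule lin_eq[of "\<lambda>a. ra (tmap S1 id (lin_ext (\<lambda>a. bvec (a, t a)) a)) + la (tmap S0 id (lin_ext (\<lambda>a. bvec (s a, a)) a))" "\<lambda>a. 0"];
      (intro lm_zero lm_rules)?; simp)

lemma h3: "ra (tmap id S0 (fst (D1 a))) + la (tmap id S1 (snd (D1 a))) = 0"
  unfolding ev
  by (rule lin_eq[of "\<lambda>a. ra (tmap id S0 (lin_ext (\<lambda>a. bvec (a, t a)) a)) + la (tmap id S1 (lin_ext (\<lambda>a. bvec (s a, a)) a))" "\<lambda>a. 0"];
      (intro lm_zero lm_rules)?; simp)

lemma hopf: "is_hopf_LM mm (kG_unit e) DD kG_counit la ra ph D1 S0 S1"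
  unfolding is_hopf_LM_def
  by (intro conjI allI is_bialgLM is_ap lm_const h1 h2 h3)

end

theorem mainTheorem8:
  fixes mult :: "'g \<Rightarrow> 'g \<Rightarrow> 'g" and e :: 'g and ginv :: "'g \<Rightarrow> 'g"
    and s t :: "'a \<Rightarrow> 'g" and lact :: "'g \<Rightarrow> 'a \<Rightarrow> 'a" and ract :: "'a \<Rightarrow> 'g \<Rightarrow> 'a"
  assumes "group_like_graph mult e ginv s t lact ract"
  shows "is_hopf_LM (kG_mult mult :: ('g \<times> 'g \<Rightarrow>\<^sub>0 'k::field_char_0) \<Rightarrow> _)
           (kG_unit e) kG_Delta0 kG_counit (kA_lact lact) (kA_ract ract) (kA_phi s t)
           (kA_Delta1 s t) (kG_S0 ginv) (kA_S1 ginv s t lact ract)"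
  by (rule hopf[OF assms])

end
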